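(* Let $\Gamma$ be a countable group acting affinely on $\mathbb{R}^n$, let $\mathsf W\subseteq\mathbb{R}^n$ be a connected open subset, and let $h:\mathsf W\to\mathbb{R}^n$ be a $C^1$ map preserving $\Gamma$-orbits (i.e. $h(x)\in\Gamma\cdot x$ for all $x\in\mathsf W$). Then there is $\gamma\in\Gamma$, acting by $\gamma\cdot x=A_\gamma x+b_\gamma$, such that $h(x)=A_\gamma x+b_\gamma$ for all $x\in\mathsf W$. *)

theory Defs
  imports "HOL-Analysis.Analysis" "HOL-Algebra.Group"
begin

definition affine_action ::
  "('g, 'm) monoid_scheme \<Rightarrow> ('g \<Rightarrow> real^'n^'n) \<Rightarrow> ('g \<Rightarrow> real^'n) \<Rightarrow> bool" where
  "affine_action G A b \<longleftrightarrow>
     A \<one>\<^bsub>G\<^esub> = mat 1 \<and> b \<one>\<^bsub>G\<^esub> = 0 \<and>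
     (\<forall>g\<in>carrier G. \<forall>h\<in>carrier G.
        A (g \<otimes>\<^bsub>G\<^esub> h) = A g ** A h \<and>
        b (g \<otimes>\<^bsub>G\<^esub> h) = A g *v b h + b g)"

definition affine_orbit ::
  "('g, 'm) monoid_scheme \<Rightarrow> ('g \<Rightarrow> real^'n^'n) \<Rightarrow> ('g \<Rightarrow> real^'n) \<Rightarrow> real^'n \<Rightarrow> (real^'n) set" where
  "affine_orbit G A b x = (\<lambda>g. A g *v x + b g) ` carrier G"

end

theory Submission
  imports Defs
begin

lemma isolated_countable:
  fixes S :: "real set"
  shows "countable {x\<in>S. \<not> x islimpt S}"
proof -
  define P where "P = {x\<in>S. \<not> x islimpt S}"
  have "\<forall>p\<in>P. \<exists>q. q \<in> \<rat> \<and> p < q \<and> (\<forall>y\<in>S. y \<le> p \<or> q < y)"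
  proof
    fix p assume "p \<in> P"
    then have "\<not> p islimpt S" by (simp add: P_def)
    then obtain e where e: "e > 0" "\<forall>y\<in>S. y \<noteq> p \<longrightarrow> \<not> dist y p < e"
      unfolding islimpt_approachable by blast
    obtain q where q: "q \<in> \<rat>" "p < q" "q < p + e"
      using Rats_dense_in_real[of p "p+e"] e by auto
    have "\<forall>y\<in>S. y \<le> p \<or> q < y"
    proof
      fix y assume "y \<in> S"
      show "y \<le> p \<or> q < y"
      proof (rule ccontr)
        assume "\<not> (y \<le> p \<or> q < y)"
        then have "y \<noteq> p" "dist y p < e" using q by (auto simp: dist_real_def)
        with e \<open>y \<in> S\<close> show False by blast
      qed
    qed
    with q show "\<exists>q. q \<in> \<rat> \<and> p < q \<and> (\<forall>y\<in>S. y \<le> p \<or> q < y)" by blast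
  qed
  from bchoice[OF this] obtain f where f: "\<forall>p\<in>P. f p \<in> \<rat> \<and> p < f p \<and> (\<forall>y\<in>S. y \<le> p \<or> f p < y)"
    by blast
  have inj: "inj_on f P"
  proof (rule inj_onI)
    fix p p' assume pp: "p \<in> P" "p' \<in> P" "f p = f p'"
    have S: "p \<in> S" "p' \<in> S" using pp by (auto simp: P_def)
    show "p = p'"
    proof (rule ccontr)
      assume "p \<noteq> p'"
      then consider "p < p'" | "p' < p" by linarith
      then show False
      proof cases
        case 1
        have "p' \<le> p \<or> f p < p'" using f pp(1) S(2) by blast
        moreover have "p' < f p'" using f pp(2) by blast
        ultimately show ?thesis using 1 pp(3) by linarith
      next
        case 2
        have "p \<le> p' \<or> f p' < p" using f pp(2) S(1) by blast
        moreover have "p < f p" using f pp(1) by blast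
        ultimately show ?thesis using 2 pp(3) by linarith
      qed
    qed
  qed
  have "f ` P \<subseteq> \<rat>" using f by auto
  then have "countable (f ` P)" using countable_rat countable_subset by blast
  then show ?thesis using inj countable_image_inj_on P_def by blast
qed

lemma line1:
  fixes g g' :: "real \<Rightarrow> 'a::euclidean_space" and ma mb :: "'k \<Rightarrow> 'a"
  assumes I: "connected I"
    and D: "\<And>t. t\<in>I \<Longrightarrow> (g has_vector_derivative g' t) (at t)"
    and C: "continuous_on I g'" and K: "countable K"
    and O: "\<And>t. t\<in>I \<Longrightarrow> \<exists>k\<in>K. g t = ma k + t *\<^sub>R mb k"
  shows "\<forall>s\<in>I. \<forall>t\<in>I. g t = g s + (t - s) *\<^sub>R g' s"
proof -
  define E where "E k = {t\<in>I. g t = ma k + t *\<^sub>R mb k}" for k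
  define Cs where "Cs = (\<Union>k\<in>K. {t\<in>E k. \<not> t islimpt E k})"
  have cC: "countable Cs" unfolding Cs_def by (intro countable_UN K isolated_countable)
  define \<Phi> where "\<Phi> t = (g' t, g t - t *\<^sub>R g' t)" for t
  have gc: "continuous_on I g"
    by (meson D continuous_at_imp_continuous_on has_vector_derivative_continuous)
  have cont: "continuous_on I \<Phi>" unfolding \<Phi>_def
    by (intro continuous_intros gc C)
  have sub: "\<Phi> ` I \<subseteq> \<Phi> ` Cs \<union> (\<lambda>k. (mb k, ma k)) ` K"
  proof
    fix u assume "u \<in> \<Phi> ` I"
    then obtain t where t: "t \<in> I" "u = \<Phi> t" by blast
    obtain k where k: "k \<in> K" "g t = ma k + t *\<^sub>R mb k" using O t by blast
    have tE: "t \<in> E k" using t k by (simp add: E_def)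
    show "u \<in> \<Phi> ` Cs \<union> (\<lambda>k. (mb k, ma k)) ` K"
    proof (cases "t islimpt E k")
      case False
      then have "t \<in> Cs" using tE k by (auto simp: Cs_def)
      then show ?thesis using t by blast
    next
      case True
      have d1: "(g has_vector_derivative g' t) (at t within E k)"
        using D[OF t(1)] has_vector_derivative_at_within by blast
      have d2: "((\<lambda>s. ma k + s *\<^sub>R mb k) has_vector_derivative mb k) (at t within E k)"
        by (auto intro!: derivative_eq_intros)
      have d3: "(g has_vector_derivative mb k) (at t within E k)"
        by (rule has_vector_derivative_transform_within[OF d2 zero_less_one tE])
           (auto simp: E_def)
      have nb: "at t within E k \<noteq> bot" using True by (simp add: trivial_limit_within)
      have "g' t = mb k" using vector_derivative_unique_within[OF nb d1 d3] .
      then have "\<Phi> t = (mb k, ma k)" using k by (simp add: \<Phi>_def)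
      then show ?thesis using t k by blast
    qed
  qed
  have "countable (\<Phi> ` I)"
    by (rule countable_subset[OF sub]) (intro countable_Un countable_image cC K)
  moreover have "connected (\<Phi> ` I)" using connected_continuous_image[OF cont I] .
  ultimately have "\<exists>a. \<Phi> ` I \<subseteq> {a}"
    using connected_card_eq_iff_nontrivial[of "\<Phi> ` I"] by auto
  then obtain a where a: "\<Phi> ` I \<subseteq> {a}" by blast
  show ?thesis
  proof (intro ballI)
    fix s t assume st: "s \<in> I" "t \<in> I"
    have "\<Phi> s = \<Phi> t" using a st by blast
    then have "g' s = g' t" "g s - s *\<^sub>R g' s = g t - t *\<^sub>R g' t" by (auto simp: \<Phi>_def)
    then show "g t = g s + (t - s) *\<^sub>R g' s" by (simp add: algebra_simps)
  qed
qed


lemma segment_affine: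
  fixes G :: "('g, 'm) monoid_scheme"
    and A :: "'g \<Rightarrow> real^'n^'n" and b :: "'g \<Rightarrow> real^'n"
    and W :: "(real^'n) set" and h :: "real^'n \<Rightarrow> real^'n"
    and h' :: "real^'n \<Rightarrow> ((real^'n) \<Rightarrow>\<^sub>L (real^'n))"
  assumes "countable (carrier G)"
    and hd: "\<And>x. x \<in> W \<Longrightarrow> (h has_derivative blinfun_apply (h' x)) (at x)"
    and hc: "continuous_on W h'"
    and ho: "\<And>x. x \<in> W \<Longrightarrow> h x \<in> affine_orbit G A b x"
    and B: "ball x0 r \<subseteq> W" and y: "y \<in> ball x0 r" and z: "z \<in> ball x0 r"
  shows "h z = h y + h' y (z - y)"
proof -
  define I where "I = {t. y + t *\<^sub>R (z - y) \<in> ball x0 r}"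
  have cI: "convex I" unfolding convex_def
  proof (intro allI impI ballI)
    fix t1 t2 u v :: real
    assume t: "t1 \<in> I" "t2 \<in> I" and uv: "0 \<le> u" "0 \<le> v" "u + v = 1"
    have "y + (u * t1 + v * t2) *\<^sub>R (z - y) = u *\<^sub>R (y + t1 *\<^sub>R (z - y)) + v *\<^sub>R (y + t2 *\<^sub>R (z - y))"
    proof -
      have "u *\<^sub>R (y + t1 *\<^sub>R (z - y)) + v *\<^sub>R (y + t2 *\<^sub>R (z - y))
          = (u + v) *\<^sub>R y + (u * t1 + v * t2) *\<^sub>R (z - y)"
        by (simp add: algebra_simps)
      then show ?thesis using uv(3) by simp
    qed
    also have "\<dots> \<in> ball x0 r"
      by (rule convexD[OF convex_ball]) (use t uv in \<open>auto simp: I_def\<close>)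
    finally show "u *\<^sub>R t1 + v *\<^sub>R t2 \<in> I" by (simp add: I_def)
  qed
  have I0: "0 \<in> I" and I1: "1 \<in> I" using y z by (auto simp: I_def)
  have IW: "\<And>t. t \<in> I \<Longrightarrow> y + t *\<^sub>R (z - y) \<in> W" using B by (auto simp: I_def)
  have L: "\<forall>s\<in>I. \<forall>t\<in>I. (\<lambda>t. h (y + t *\<^sub>R (z - y))) t
        = (\<lambda>t. h (y + t *\<^sub>R (z - y))) s + (t - s) *\<^sub>R (\<lambda>t. h' (y + t *\<^sub>R (z - y)) (z - y)) s"
  proof (rule line1[where K="carrier G" and ma="\<lambda>g. A g *v y + b g" and mb="\<lambda>g. A g *v (z - y)"])
    show "connected I" using cI convex_connected by blast
    show "countable (carrier G)" by fact
  next
    fix t assume t: "t \<in> I"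
    have l: "((\<lambda>t. y + t *\<^sub>R (z - y)) has_derivative (\<lambda>s. s *\<^sub>R (z - y))) (at t)"
      by (auto intro!: derivative_eq_intros)
    have "((\<lambda>t. h (y + t *\<^sub>R (z - y))) has_derivative (\<lambda>s. h' (y + t *\<^sub>R (z - y)) (s *\<^sub>R (z - y)))) (at t)"
      by (rule has_derivative_compose[OF l hd[OF IW[OF t]]])
    then show "((\<lambda>t. h (y + t *\<^sub>R (z - y))) has_vector_derivative h' (y + t *\<^sub>R (z - y)) (z - y)) (at t)"
      by (simp add: has_vector_derivative_def blinfun.scaleR_right)
  next
    have "continuous_on I (\<lambda>t. h' (y + t *\<^sub>R (z - y)))"
      by (rule continuous_on_compose2[OF hc]) (auto intro!: continuous_intros IW)
    then show "continuous_on I (\<lambda>t. h' (y + t *\<^sub>R (z - y)) (z - y))"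
      by (auto intro!: continuous_intros)
  next
    fix t assume t: "t \<in> I"
    obtain g where g: "g \<in> carrier G" "h (y + t *\<^sub>R (z - y)) = A g *v (y + t *\<^sub>R (z - y)) + b g"
      using ho[OF IW[OF t]] unfolding affine_orbit_def by blast
    then show "\<exists>k\<in>carrier G. h (y + t *\<^sub>R (z - y)) = (A k *v y + b k) + t *\<^sub>R (A k *v (z - y))"
      by (auto simp: algebra_simps)
  qed
  show ?thesis using L[rule_format, OF I0 I1] by simp
qed

theorem lemma1:
  fixes G :: "('g, 'm) monoid_scheme"
    and A :: "'g \<Rightarrow> real^'n^'n" and b :: "'g \<Rightarrow> real^'n"
    and W :: "(real^'n) set" and h :: "real^'n \<Rightarrow> real^'n"
    and h' :: "real^'n \<Rightarrow> ((real^'n) \<Rightarrow>\<^sub>L (real^'n))"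
  assumes "group G" and "countable (carrier G)"
    and "affine_action G A b"
    and "open W" and "connected W"
    and "\<And>x. x \<in> W \<Longrightarrow> (h has_derivative blinfun_apply (h' x)) (at x)"
    and "continuous_on W h'"
    and "\<And>x. x \<in> W \<Longrightarrow> h x \<in> affine_orbit G A b x"
  shows "\<exists>g\<in>carrier G. \<forall>x\<in>W. h x = A g *v x + b g"
proof -
  note G = assms(2) and hd = assms(6) and hc = assms(7) and ho = assms(8)
  note Wo = assms(4) and Wc = assms(5)
  have loc: "\<And>x0 r z. ball x0 r \<subseteq> W \<Longrightarrow> z \<in> ball x0 r \<Longrightarrow> h z = h x0 + h' x0 (z - x0)"
  proof -
    fix x0 r z assume B: "ball x0 r \<subseteq> W" and z: "z \<in> ball x0 r"
    then have "x0 \<in> ball x0 r" by (metis centre_in_ball empty_iff ball_eq_empty not_le)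
    then show "h z = h x0 + h' x0 (z - x0)" using segment_affine[OF G hd hc ho B _ z] by blast
  qed
  have hconst: "h' z = h' x0" if B: "ball x0 r \<subseteq> W" and z: "z \<in> ball x0 r" for x0 r z
  proof -
    have "((\<lambda>w. h x0 + h' x0 (w - x0)) has_derivative blinfun_apply (h' x0)) (at z)"
      by (auto intro!: derivative_eq_intros simp: blinfun.diff_right)
    then have "(h has_derivative blinfun_apply (h' x0)) (at z)"
      by (rule has_derivative_transform_within_open[OF _ open_ball z]) (use loc[OF B] in auto)
    moreover have "(h has_derivative blinfun_apply (h' z)) (at z)" using hd B z by blast
    ultimately have "blinfun_apply (h' z) = blinfun_apply (h' x0)" using has_derivative_unique by blast
    then show ?thesis by (simp add: blinfun_apply_inject)
  qed
  have "h' constant_on W"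
  proof (rule has_derivative_zero_connected_constant_on[OF Wc Wo finite.emptyI hc])
    show "\<forall>x\<in>W - {}. (h' has_derivative (\<lambda>h. 0)) (at x within W)"
    proof
      fix x assume "x \<in> W - {}"
      then obtain r where r: "r > 0" "ball x r \<subseteq> W" using Wo open_contains_ball by blast
      have d: "((\<lambda>_. h' x) has_derivative (\<lambda>h. 0)) (at x)" by (rule has_derivative_const)
      have eq: "\<And>w. w \<in> ball x r \<Longrightarrow> h' x = h' w" using hconst[OF r(2)] by metis
      have "(h' has_derivative (\<lambda>h. 0)) (at x)"
        by (rule has_derivative_transform_within_open[where g=h', OF d open_ball]) (use r(1) eq in auto)
      then show "(h' has_derivative (\<lambda>h. 0)) (at x within W)" using has_derivative_at_withinI by blast
    qed
  qed
  then obtain M where M: "\<And>x. x \<in> W \<Longrightarrow> h' x = M" unfolding constant_on_def by blast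
  have "(\<lambda>x. h x - M x) constant_on W"
  proof (rule has_derivative_zero_connected_constant_on[OF Wc Wo finite.emptyI])
    show "continuous_on W (\<lambda>x. h x - M x)"
      using hd by (intro continuous_intros) (meson continuous_at_imp_continuous_on has_derivative_continuous)
    show "\<forall>x\<in>W - {}. ((\<lambda>x. h x - M x) has_derivative (\<lambda>h. 0)) (at x within W)"
    proof
      fix x assume x: "x \<in> W - {}"
      have "((\<lambda>x. h x - M x) has_derivative (\<lambda>v. h' x v - M v)) (at x)"
        using hd x by (auto intro!: derivative_eq_intros)
      then have "((\<lambda>x. h x - M x) has_derivative (\<lambda>v. 0)) (at x)" using M x by simp
      then show "((\<lambda>x. h x - M x) has_derivative (\<lambda>h. 0)) (at x within W)"
        using has_derivative_at_withinI by blast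
    qed
  qed
  then obtain c where c0: "\<And>x. x \<in> W \<Longrightarrow> h x - M x = c"
    unfolding constant_on_def by blast
  have c: "\<And>x. x \<in> W \<Longrightarrow> h x = M x + c"
  proof -
    fix x assume "x \<in> W"
    then have "h x - M x = c" by (rule c0)
    then show "h x = M x + c" by (simp add: algebra_simps)
  qed
  show ?thesis
  proof (cases "W = {}")
    case True
    then show ?thesis using monoid.one_closed[OF group.is_monoid[OF assms(1)]] by blast
  next
    case False
    then obtain x0 where x0: "x0 \<in> W" by blast
    then obtain r where r: "r > 0" "ball x0 r \<subseteq> W" using Wo open_contains_ball by blast
    show ?thesis
    proof (rule ccontr)
      assume nex: "\<not> ?thesis"
      define N where "N g = {x. A g *v x + b g = M x + c}" for g
      have mw: "\<And>x. matrix (blinfun_apply M) *v x = M x"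
        using matrix_vector_mul(3)[OF blinfun.bounded_linear_right, of M] by (rule fun_cong)
      have neg: "negligible (N g)" if g: "g \<in> carrier G" for g
      proof -
        obtain x1 where x1: "x1 \<in> W" "h x1 \<noteq> A g *v x1 + b g" using nex g by blast
        define D where "D = A g - matrix (blinfun_apply M)"
        define d where "d = b g - c"
        have MD: "A g *v x + b g - (M x + c) = D *v x + d" for x
        proof -
          have "D *v x = A g *v x - M x"
            unfolding D_def matrix_vector_mult_diff_rdistrib mw ..
          then show ?thesis unfolding d_def by (simp add: algebra_simps)
        qed
        have "A g *v x1 + b g - (M x1 + c) \<noteq> 0" using x1 c[OF x1(1)] by simp
        then have "D *v x1 + d \<noteq> 0" using MD[of x1] by simp
        then obtain i where i: "(D *v x1 + d) $ i \<noteq> 0" by (auto simp: vec_eq_iff)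
        have comp: "(D *v x + d) $ i = D $ i \<bullet> x + d $ i" for x
          by (simp add: matrix_vector_mult_def inner_vec_def)
        have "D $ i \<noteq> 0 \<or> - d $ i \<noteq> 0" using i comp[of x1] by auto
        then have hyp: "negligible {x. D $ i \<bullet> x = - d $ i}" by (rule negligible_hyperplane)
        have "N g \<subseteq> {x. D $ i \<bullet> x = - d $ i}"
        proof
          fix x assume "x \<in> N g"
          then have "A g *v x + b g - (M x + c) = 0" by (simp add: N_def)
          then have "D *v x + d = 0" using MD[of x] by simp
          then have "(D *v x + d) $ i = 0" by simp
          then have "D $ i \<bullet> x + d $ i = 0" using comp[of x] by simp
          then show "x \<in> {x. D $ i \<bullet> x = - d $ i}" by (simp add: eq_neg_iff_add_eq_0)
        qed
        then show ?thesis using hyp negligible_subset by blast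
      qed
      have "negligible (\<Union> (N ` carrier G))"
        using G neg by (intro negligible_countable_Union) auto
      moreover have "ball x0 r \<subseteq> \<Union> (N ` carrier G)"
      proof
        fix x assume "x \<in> ball x0 r"
        then have xW: "x \<in> W" using r by blast
        obtain g where "g \<in> carrier G" "h x = A g *v x + b g"
          using ho[OF xW] unfolding affine_orbit_def by blast
        then show "x \<in> \<Union> (N ` carrier G)" using c[OF xW] by (auto simp: N_def)
      qed
      ultimately have "negligible (ball x0 r)" using negligible_subset by blast
      then have "measure lebesgue (ball x0 r) = 0" by (rule negligible_imp_measure0)
      moreover have "measure lebesgue (ball x0 r) = measure lborel (ball x0 r)"
        by (rule measure_completion) simp
      moreover have "measure lborel (ball x0 r) > 0" using r(1) by (rule content_ball_pos)
      ultimately show False by simp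
    qed
  qed
qed

end
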